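(* For every integer $n\ge 0$, \[ \sum_{k=0}^{n}\Big(-\frac{1}{4}\Big)^k\binom{n}{k}\binom{1+2k}{k}H_{1+2k} =\frac{1}{2^{1+2n}(1+2n)}\binom{1+2n}{n}\Big\{\frac{8+8n}{1+2n}+3H_n-4H_{1+2n}\Big\}-\frac{1}{1+n}. \]
   Context: For an integer $m\ge 0$, $H_m$ denotes the $m$-th harmonic number: $H_0=0$ and $H_m=\sum_{j=1}^m \frac1j$ for $m\ge1$. $\binom{n}{k}$ is the usual binomial coefficient. *)

theory Defs
  imports "HOL-Analysis.Analysis"
begin

end

theory Submission
  imports Defs
begin

declare binomial_Suc_Suc [simp del]

lemma B1: "real (Suc m choose k) * (real m + 1 - real k) = (real m + 1) * real (m choose k)"
proof (cases "k \<le> Suc m")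
  case True
  have e: "(Suc m - k) * (Suc m choose k) = Suc m * (m choose k)"
    using binomial_absorb_comp[of "Suc m" k] by simp
  have "real (Suc m - k) * real (Suc m choose k) = real (Suc m) * real (m choose k)"
    by (metis e of_nat_mult)
  moreover have "real (Suc m - k) = real m + 1 - real k" using True by (simp add: of_nat_diff)
  ultimately show ?thesis by (simp add: mult.commute)
next
  case False
  have "Suc m choose k = 0" using False by (intro binomial_eq_0) simp
  moreover have "m choose k = 0" using False by (intro binomial_eq_0) simp
  ultimately show ?thesis by (simp only: of_nat_0 mult_zero_left mult_zero_right)
qed

lemma B2: "real (Suc m choose Suc k) * (real k + 1) = real (Suc m choose k) * (real m + 1 - real k)"
proof -
  have e: "Suc k * (Suc m choose Suc k) = Suc m * (m choose k)"
    using binomial_absorption[of k "Suc m"] by simp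
  have "real (Suc k) * real (Suc m choose Suc k) = real (Suc m) * real (m choose k)"
    by (metis e of_nat_mult)
  then have "real (Suc m choose Suc k) * (real k + 1) = (real m + 1) * real (m choose k)"
    by (simp add: algebra_simps)
  then show ?thesis using B1[of m k] by simp
qed

lemma C1: "real (Suc (2*k) choose k) = real ((2*k) choose k) * (2*real k + 1) / (real k + 1)"
proof -
  have e: "Suc (2*k) * ((2*k) choose k) = (Suc (2*k) choose Suc k) * Suc k"
    by (rule Suc_times_binomial_eq)
  moreover have "(Suc (2*k) choose Suc k) = (Suc (2*k) choose k)"
    using binomial_symmetric[of k "Suc (2*k)"] by simp
  ultimately have "real (Suc (2*k)) * real ((2*k) choose k) = real (Suc (2*k) choose k) * real (Suc k)"
    by (metis of_nat_mult)
  then have "real ((2*k) choose k) * (2*real k + 1) = real (Suc (2*k) choose k) * (real k + 1)"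
    by (simp add: algebra_simps)
  then show ?thesis by (simp add: eq_divide_eq add_pos_nonneg)
qed

lemma C2: "real ((2*Suc k) choose Suc k) = 2 * real (Suc (2*k) choose k)"
proof -
  have "Suc (Suc (2*k)) * (Suc (2*k) choose k) = (Suc (Suc (2*k)) choose Suc k) * Suc k"
    by (rule Suc_times_binomial_eq)
  then have "real (Suc (Suc (2*k))) * real (Suc (2*k) choose k) = real (Suc (Suc (2*k)) choose Suc k) * real (Suc k)"
    by (metis of_nat_mult)
  moreover have "real (Suc (Suc (2*k))) = 2 * real (Suc k)" by simp
  moreover have "2 * Suc k = Suc (Suc (2*k))" by simp
  ultimately show ?thesis by (metis (no_types, lifting) mult.assoc mult.commute mult_cancel_right of_nat_eq_0_iff nat.distinct(1))
qed

definition ee :: "nat \<Rightarrow> real" where "ee k = (-1/4)^k * real ((2*k) choose k)"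
definition bb :: "nat \<Rightarrow> real" where "bb k = (1/4)^k * real ((2*k) choose k)"

lemma alg_ee: "(k::real) \<ge> 0 \<Longrightarrow> p*(-1/4)*(2*(Y*a/(k+1))) = - (p*Y)*a/(2*k+2)"
  by (simp add: field_simps)
lemma alg_bb: "(k::real) \<ge> 0 \<Longrightarrow> p*(1/4)*(2*(Y*a/(k+1))) = (p*Y)*a/(2*k+2)"
  by (simp add: field_simps)

lemma ee_Suc: "ee (Suc k) = - ee k * (2*real k + 1) / (2*real k + 2)"
proof -
  have "ee (Suc k) = (-1/4)^k * (-1/4) * (2 * (real ((2*k) choose k) * (2*real k + 1) / (real k + 1)))"
    unfolding ee_def using C2[of k] C1[of k] by simp
  also have "\<dots> = - ((-1/4)^k * real ((2*k) choose k)) * (2*real k + 1) / (2*real k + 2)"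
    by (rule alg_ee) simp
  finally show ?thesis unfolding ee_def .
qed

lemma bb_Suc: "bb (Suc k) = bb k * (2*real k + 1) / (2*real k + 2)"
proof -
  have "bb (Suc k) = (1/4)^k * (1/4) * (2 * (real ((2*k) choose k) * (2*real k + 1) / (real k + 1)))"
    unfolding bb_def using C2[of k] C1[of k] by simp
  also have "\<dots> = ((1/4)^k * real ((2*k) choose k)) * (2*real k + 1) / (2*real k + 2)"
    by (rule alg_bb) simp
  finally show ?thesis unfolding bb_def .
qed

definition cc :: "nat \<Rightarrow> real" where "cc k = (-1/4)^k * real ((1+2*k) choose k)"
definition hh :: "nat \<Rightarrow> real" where "hh k = harm (1+2*k)"
definition fW :: "nat \<Rightarrow> nat \<Rightarrow> real" where "fW m j = real (m choose j) * ee j * (4*real j + 1)"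
definition GW :: "nat \<Rightarrow> nat \<Rightarrow> real" where
  "GW m k = -2*(real k)^2*(12*real k-7+(8*real k-6)*real m)/(real m+1) * real (Suc m choose k) * ee k"
definition Gm :: "nat \<Rightarrow> nat \<Rightarrow> real" where
  "Gm n k = -2*real k*(real k+1)/(real n+1) * real (Suc n choose k) * cc k"
definition TT :: "nat \<Rightarrow> nat \<Rightarrow> real" where "TT n k = real (n choose k) * cc k * hh k"

lemma cc_ee: "cc k = ee k * (2*real k + 1) / (real k + 1)"
  unfolding cc_def ee_def using C1[of k] by simp

lemma ccS: "cc (Suc k) = ee (Suc k) * (2*real k + 3) / (real k + 2)"
  unfolding cc_ee by (simp add: algebra_simps)

lemma hhS: "hh (Suc k) = hh k + 1/(2*real k + 2) + 1/(2*real k + 3)"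
proof -
  have "1 + 2 * Suc k = Suc (Suc (1 + 2*k))" by simp
  then have "hh (Suc k) = harm (Suc (Suc (1+2*k)))" unfolding hh_def by simp
  also have "\<dots> = hh k + inverse (real (Suc (1+2*k))) + inverse (real (Suc (Suc (1+2*k))))"
    unfolding hh_def by (simp add: harm_Suc)
  finally show ?thesis by (simp add: divide_inverse algebra_simps)
qed

lemma Ysub: "real (n choose k) = real (Suc n choose k) * (real n + 1 - real k) / (real n + 1)"
  using B1[of n k] by (simp add: eq_divide_eq add_pos_nonneg)

lemma Zsub: "real (Suc n choose Suc k) = real (Suc n choose k) * (real n + 1 - real k) / (real k + 1)"
  using B2[of n k] by (simp add: eq_divide_eq add_pos_nonneg)

lemma rSuc: "real (Suc k) = real k + 1" by simp

lemma Wstep: "2*(real m+1)*(2*real m+1)*fW (Suc m) k - (2*real m+3)*(2*real m-1)*fW m k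
   = GW m (Suc k) - GW m k"
proof -
  have k0: "0 \<le> real k" "0 \<le> real m" by simp_all
  have nz: "real m + 1 \<noteq> 0" "real k + 1 \<noteq> 0" "2*real k + 2 \<noteq> 0" "2*(real k + 1) \<noteq> 0"
    by (use k0 in \<open>smt (verit)\<close>)+
  show ?thesis
    unfolding fW_def GW_def
    apply (simp only: Ysub[of m k] Zsub[of m k] ee_Suc[of k] rSuc[of k])
    using nz apply (simp add: divide_simps)
    by algebra
qed

lemma Mstep: "2*(real n+2)*TT (Suc n) k - (2*real n+1)*TT n k
   = (Gm n (Suc k) * hh (Suc k) - Gm n k * hh k) + fW (Suc n) (Suc k) / (real n + 1)"
proof -
  have k0: "0 \<le> real k" "0 \<le> real n" by simp_all
  have nz: "real n + 1 \<noteq> 0" "real k + 1 \<noteq> 0" "2*real k + 2 \<noteq> 0" "2*(real k + 1) \<noteq> 0"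
     "real k + 2 \<noteq> 0" "2*real k + 3 \<noteq> 0" "real k + 1 + 1 \<noteq> 0"
    by (use k0 in \<open>smt (verit)\<close>)+
  show ?thesis
    unfolding fW_def TT_def Gm_def
    apply (simp only: Ysub[of n k] Zsub[of n k] ccS[of k] hhS[of k] ee_Suc[of k] cc_ee[of k] rSuc[of k])
    using nz apply (simp add: divide_simps)
    by algebra
qed

lemma fW_zero: "fW m (Suc m) = 0" unfolding fW_def by simp
lemma TT_zero: "TT n (Suc n) = 0" unfolding TT_def by simp

lemma Wsum: "(\<Sum>j<Suc m. fW m j) = - bb m * (2*real m + 1) / (2*real m - 1)"
proof (induction m)
  case 0
  show ?case by (simp add: fW_def ee_def bb_def)
next
  case (Suc m)
  let ?a = "2*(real m+1)*(2*real m+1)" and ?b = "(2*real m+3)*(2*real m-1)"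
  have "(\<Sum>k<Suc (Suc m). ?a * fW (Suc m) k - ?b * fW m k) = (\<Sum>k<Suc (Suc m). GW m (Suc k) - GW m k)"
    using Wstep by simp
  also have "\<dots> = GW m (Suc (Suc m)) - GW m 0" by (rule sum_lessThan_telescope)
  also have "\<dots> = 0" unfolding GW_def by simp
  finally have t: "(\<Sum>k<Suc (Suc m). ?a * fW (Suc m) k - ?b * fW m k) = 0" .
  have s2: "(\<Sum>k<Suc (Suc m). fW m k) = (\<Sum>k<Suc m. fW m k)" by (simp add: fW_zero)
  have "?a * (\<Sum>k<Suc (Suc m). fW (Suc m) k) = ?b * (\<Sum>k<Suc m. fW m k)"
    using t unfolding sum_subtractf sum_distrib_left[symmetric] s2 by simp
  then have e: "?a * (\<Sum>k<Suc (Suc m). fW (Suc m) k) = ?b * (- bb m * (2*real m + 1) / (2*real m - 1))"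
    using Suc.IH by simp
  have k0: "0 \<le> real m" by simp
  have "2*m \<noteq> (1::nat)" by arith
  then have "real (2*m) \<noteq> 1" by (metis of_nat_eq_1_iff)
  then have nz0: "2*real m - 1 \<noteq> 0" by simp
  have nz: "real m + 1 \<noteq> 0" "2*real m + 1 \<noteq> 0" "2*real m + 2 \<noteq> 0" "2*(real m+1)+1 \<noteq> 0"
    "2*(real m + 1) - 1 \<noteq> 0"
    by (use k0 in \<open>smt (verit)\<close>)+
  show ?case
    using e nz nz0 unfolding bb_Suc rSuc
    apply (simp add: divide_simps)
    by algebra
qed

definition SS :: "nat \<Rightarrow> real" where "SS n = (\<Sum>k<Suc n. TT n k)"

lemma Srec: "2*(real n+2)*SS (Suc n) - (2*real n+1)*SS n = ((\<Sum>j<Suc (Suc n). fW (Suc n) j) - 1) / (real n + 1)"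
proof -
  have "(\<Sum>k<Suc (Suc n). 2*(real n+2)*TT (Suc n) k - (2*real n+1)*TT n k)
      = (\<Sum>k<Suc (Suc n). (Gm n (Suc k) * hh (Suc k) - Gm n k * hh k) + fW (Suc n) (Suc k) / (real n + 1))"
    using Mstep by simp
  also have "\<dots> = (\<Sum>k<Suc (Suc n). Gm n (Suc k) * hh (Suc k) - Gm n k * hh k)
       + (\<Sum>k<Suc (Suc n). fW (Suc n) (Suc k)) / (real n + 1)"
    by (simp only: sum.distrib sum_divide_distrib)
  also have "(\<Sum>k<Suc (Suc n). Gm n (Suc k) * hh (Suc k) - Gm n k * hh k) = 0"
  proof -
    have "(\<Sum>k<Suc (Suc n). Gm n (Suc k) * hh (Suc k) - Gm n k * hh k)
       = Gm n (Suc (Suc n)) * hh (Suc (Suc n)) - Gm n 0 * hh 0"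
      by (rule sum_lessThan_telescope)
    also have "\<dots> = 0" unfolding Gm_def by simp
    finally show ?thesis .
  qed
  also have "(\<Sum>k<Suc (Suc n). fW (Suc n) (Suc k)) = (\<Sum>j<Suc (Suc n). fW (Suc n) j) - 1"
  proof -
    have "(\<Sum>j<Suc (Suc (Suc n)). fW (Suc n) j) = fW (Suc n) 0 + (\<Sum>k<Suc (Suc n). fW (Suc n) (Suc k))"
      by (rule sum.lessThan_Suc_shift)
    moreover have "(\<Sum>j<Suc (Suc (Suc n)). fW (Suc n) j) = (\<Sum>j<Suc (Suc n). fW (Suc n) j)"
      using fW_zero[of "Suc n"] by simp
    moreover have "fW (Suc n) 0 = 1" by (simp add: fW_def ee_def)
    ultimately show ?thesis by simp
  qed
  finally have e: "(\<Sum>k<Suc (Suc n). 2*(real n+2)*TT (Suc n) k - (2*real n+1)*TT n k)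
      = ((\<Sum>j<Suc (Suc n). fW (Suc n) j) - 1) / (real n + 1)" by simp
  have s2: "(\<Sum>k<Suc (Suc n). TT n k) = SS n" unfolding SS_def using TT_zero[of n] by simp
  show ?thesis using e unfolding sum_subtractf sum_distrib_left[symmetric] s2 SS_def by simp
qed

definition RR :: "nat \<Rightarrow> real" where
  "RR n = bb n / (2*(real n+1)) * (8*(real n+1)/(2*real n+1) + 3*harm n - 4*hh n) - 1/(real n+1)"

lemma SS_RR: "SS n = RR n"
proof (induction n)
  case 0
  show ?case by (simp add: SS_def RR_def TT_def cc_def hh_def bb_def harm_def)
next
  case (Suc n)
  have r: "2*(real n+2)*SS (Suc n) = (2*real n+1)*RR n + ((- bb (Suc n) * (2*real (Suc n) + 1) / (2*real (Suc n) - 1)) - 1) / (real n + 1)"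
    using Srec[of n] Wsum[of "Suc n"] Suc.IH by simp
  have k0: "0 \<le> real n" by simp
  have "2*n \<noteq> (1::nat)" by arith
  then have "real (2*n) \<noteq> 1" by (metis of_nat_eq_1_iff)
  then have nz0: "2*real n - 1 \<noteq> 0" by simp
  have nz: "real n + 1 \<noteq> 0" "2*real n + 1 \<noteq> 0" "2*real n + 2 \<noteq> 0" "2*(real n+1)+1 \<noteq> 0"
    "2*(real n + 1) - 1 \<noteq> 0" "real n + 2 \<noteq> 0" "real n + 1 + 1 \<noteq> 0" "2*real n + 3 \<noteq> 0" "2*(real n+1) \<noteq> 0"
    by (use k0 in \<open>smt (verit)\<close>)+
  have r2: "SS (Suc n) = ((2*real n+1)*RR n + ((- bb (Suc n) * (2*real (Suc n) + 1) / (2*real (Suc n) - 1)) - 1) / (real n + 1)) / (2*(real n+2))"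
    using r nz by (simp add: field_simps)
  show ?case
    unfolding r2 using nz nz0 unfolding RR_def bb_Suc rSuc harm_Suc hhS
    apply (simp add: divide_simps)
    by algebra
qed

theorem theorem10:
  fixes n :: nat
  shows "(\<Sum>k=0..n. (-1/4::real)^k * real (n choose k) * real ((1+2*k) choose k) * harm (1+2*k))
    = 1 / (2^(1+2*n) * real (1+2*n)) * real ((1+2*n) choose n)
        * ((8 + 8 * real n) / real (1+2*n) + 3 * harm n - 4 * harm (1+2*n))
      - 1 / real (1+n)"
proof -
  have iv: "{0..n} = {..<Suc n}" by auto
  have L: "(\<Sum>k=0..n. (-1/4::real)^k * real (n choose k) * real ((1+2*k) choose k) * harm (1+2*k)) = SS n"
    unfolding SS_def iv by (rule sum.cong) (simp_all add: TT_def cc_def hh_def mult_ac)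
  have p: "(2::real)^(1+2*n) = 2*(4::real)^n" by (simp add: power_add power_mult)
  have b: "bb n = real ((2*n) choose n) / 4^n" unfolding bb_def by (simp add: power_one_over)
  have c: "real ((1+2*n) choose n) = real ((2*n) choose n) * (2*real n + 1) / (real n + 1)"
    using C1[of n] by simp
  have nz: "(4::real)^n \<noteq> 0" "real n + 1 \<noteq> 0" "2*real n + 1 \<noteq> 0" "1 + real n \<noteq> 0" "1 + 2*real n \<noteq> 0"
    by (simp_all add: add_pos_nonneg)
  have R: "RR n = 1 / (2^(1+2*n) * real (1+2*n)) * real ((1+2*n) choose n)
        * ((8 + 8 * real n) / real (1+2*n) + 3 * harm n - 4 * harm (1+2*n))
      - 1 / real (1+n)"
    unfolding RR_def b c p hh_def using nz
    apply (simp add: divide_simps)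
    by algebra
  show ?thesis using L R SS_RR[of n] by simp
qed

end
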